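(* Let $G$ be a digraph and $f$ a discrete Morse function on $G$. Then $\mathcal M(G,f)$ is an acyclic matching: there is no cycle $$\alpha_1<\beta_1>\alpha_2<\beta_2>\alpha_3<\cdots>\alpha_k<\beta_k>\alpha_1$$ with $k\ge2$, where all $\beta_i$ are distinct, $(\alpha_i,\beta_i)\in\mathcal M(G,f)$ for $1\le i\le k$, and the $\alpha_i$ are allowed elementary $n$-paths and the $\beta_i$ allowed elementary $(n+1)$-paths for some $n\ge0$.
   Context: A digraph $G=(V,E)$ consists of a set $V$ and $E\subseteq(V\times V)\setminus\{(v,v)\}$; $(u,v)\in E$ is written $u\to v$. An allowed elementary $n$-path is a sequence $v_0\cdots v_n$ of vertices with $v_{i-1}\to v_i\in E$ for $1\le i\le n$. For allowed elementary paths, $\gamma'<\gamma$ (or $\gamma>\gamma'$) means $\gamma'$ is obtained from $\gamma$ by deleting some entries. A map $f:V\to[0,+\infty)$ is a discrete Morse function on $G$ if for every allowed elementary path $v_0\cdots v_n$: (i) there is at most one index $i$ with $f(v_i)=0$ such that $v_0\cdots v_{i-1}v_{i+1}\cdots v_n$ is an allowed elementary $(n-1)$-path; (ii) there is at most one vertex $u$ with $f(u)=0$ such that for some $-1\le j\le n$ the sequence $v_0\cdots v_juv_{j+1}\cdots v_n$ (meaning $uv_0\cdots v_n$ if $j=-1$, $v_0\cdots v_nu$ if $j=n$) is an allowed elementary $(n+1)$-path. Set $f(v_0\cdots v_n)=\sum_if(v_i)$. $\mathcal M(G,f)$ is the set of pairs $(\alpha,\beta)$ with $\alpha$ an allowed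 elementary $n$-path, $\beta$ an allowed elementary $(n+1)$-path for some $n\ge0$, $\alpha<\beta$ and $f(\alpha)=f(\beta)$. *)

theory Defs
  imports Complex_Main "HOL-Library.Sublist"
begin

definition digraph :: "'v set \<Rightarrow> ('v \<times> 'v) set \<Rightarrow> bool" where
  "digraph V E \<longleftrightarrow> E \<subseteq> (V \<times> V) - {(v, v) | v. True}"

definition allowed_path :: "'v set \<Rightarrow> ('v \<times> 'v) set \<Rightarrow> nat \<Rightarrow> 'v list \<Rightarrow> bool" where
  "allowed_path V E n p \<longleftrightarrow> length p = Suc n \<and> set p \<subseteq> V \<and>
     (\<forall>i<n. (p ! i, p ! Suc i) \<in> E)"

definition any_allowed_path :: "'v set \<Rightarrow> ('v \<times> 'v) set \<Rightarrow> 'v list \<Rightarrow> bool" where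
  "any_allowed_path V E p \<longleftrightarrow> (\<exists>n. allowed_path V E n p)"

definition del_at :: "nat \<Rightarrow> 'v list \<Rightarrow> 'v list" where
  "del_at i p = take i p @ drop (Suc i) p"

definition ins_at :: "nat \<Rightarrow> 'v \<Rightarrow> 'v list \<Rightarrow> 'v list" where
  "ins_at j u p = take j p @ u # drop j p"

definition discrete_morse :: "'v set \<Rightarrow> ('v \<times> 'v) set \<Rightarrow> ('v \<Rightarrow> real) \<Rightarrow> bool" where
  "discrete_morse V E f \<longleftrightarrow> (\<forall>v\<in>V. f v \<ge> 0) \<and>
    (\<forall>n p. allowed_path V E n p \<longrightarrow>
       (\<forall>i i'. i \<le> n \<and> f (p ! i) = 0 \<and> n \<ge> 1 \<and> allowed_path V E (n - 1) (del_at i p) \<and>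
               i' \<le> n \<and> f (p ! i') = 0 \<and> allowed_path V E (n - 1) (del_at i' p) \<longrightarrow> i = i') \<and>
       (\<forall>u u'. f u = 0 \<and> (\<exists>j\<le>Suc n. allowed_path V E (Suc n) (ins_at j u p)) \<and>
               f u' = 0 \<and> (\<exists>j\<le>Suc n. allowed_path V E (Suc n) (ins_at j u' p)) \<longrightarrow> u = u'))"

definition path_val :: "('v \<Rightarrow> real) \<Rightarrow> 'v list \<Rightarrow> real" where
  "path_val f p = sum_list (map f p)"

definition morse_pairs :: "'v set \<Rightarrow> ('v \<times> 'v) set \<Rightarrow> ('v \<Rightarrow> real) \<Rightarrow> ('v list \<times> 'v list) set" where
  "morse_pairs V E f = {(a, b). \<exists>n. allowed_path V E n a \<and> allowed_path V E (Suc n) b \<and>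
      subseq a b \<and> a \<noteq> b \<and> path_val f a = path_val f b}"

end

theory Submission imports Defs begin

lemma succ_nth: "successively P xs \<longleftrightarrow> (\<forall>i. Suc i < length xs \<longrightarrow> P (xs!i) (xs!Suc i))"
proof (induction xs rule: induct_list012)
  case (3 x y xs)
  show ?case
    apply (simp add: 3(2))
    apply (auto simp: nth_Cons split: nat.splits)
    done
qed auto

lemma allowed_succ: "allowed_path V E n p \<longleftrightarrow> length p = Suc n \<and> set p \<subseteq> V \<and> successively (\<lambda>x y. (x,y)\<in>E) p"
  unfolding allowed_path_def succ_nth by auto

lemma subseq_del: "subseq a b \<Longrightarrow> length b = Suc (length a) \<Longrightarrow> \<exists>j<length b. a = del_at j b"
proof (induction rule: list_emb.induct)
  case (list_emb_Nil ys) then show ?case by (auto simp: del_at_def length_Suc_conv)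
next
  case (list_emb_Cons xs ys y)
  then have "xs = ys" using subseq_same_length list_emb_length by (metis Suc_inject le_SucE length_Cons not_subseq_length)
  then show ?case by (auto simp: del_at_def intro: exI[of _ 0])
next
  case (list_emb_Cons2 x y xs ys)
  then obtain j where "j < length ys" "xs = del_at j ys" by auto
  then show ?case using list_emb_Cons2 by (auto simp: del_at_def intro!: exI[of _ "Suc j"])
qed

lemma ins_del: "j < length b \<Longrightarrow> ins_at j (b!j) (del_at j b) = b"
  by (simp add: ins_at_def del_at_def Cons_nth_drop_Suc)

lemma val_del: "j < length b \<Longrightarrow> path_val f b = path_val f (del_at j b) + f (b!j)"
proof -
  assume j: "j < length b"
  have "b = take j b @ b!j # drop (Suc j) b" using j by (simp add: id_take_nth_drop)
  then have "path_val f b = sum_list (map f (take j b)) + f (b!j) + sum_list (map f (drop (Suc j) b))"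
    unfolding path_val_def by (metis add.assoc list.simps(9) map_append sum_list.Cons sum_list.append)
  then show ?thesis by (simp add: path_val_def del_at_def)
qed

lemma succ_gamma:
  assumes "successively P (A @ u # B @ C)" "successively P (A @ B @ u # C)" "B \<noteq> []"
  shows "successively P (A @ u # B @ u # C)"
proof -
  have 1: "successively P (A @ [u])" "successively P (u # B)" "successively P C"
    using assms(1) by (auto simp: successively_append_iff successively_Cons)
  have 2: "successively P (B @ [u])" "C = [] \<or> P u (hd C)"
    using assms(2) assms(3) by (auto simp: successively_append_iff successively_Cons)
  have "successively P (u # B @ [u])" using 1(2) 2(1) assms(3)
    by (auto simp: successively_append_iff successively_Cons)
  then have "successively P (u # B @ u # C)" using 1(3) 2(2) assms(3)
    by (auto simp: successively_append_iff successively_Cons hd_append)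
  then show ?thesis using 1(1)
    by (auto simp: successively_append_iff successively_Cons)
qed
lemma gamma:
  assumes j: "j0 < j1" "j1 \<le> length a"
    and p0: "allowed_path V E (Suc n) (ins_at j0 u a)"
    and p1: "allowed_path V E (Suc n) (ins_at j1 u a)"
  shows "\<exists>g. allowed_path V E (Suc (Suc n)) g \<and> del_at j0 g = ins_at j1 u a \<and>
           del_at (Suc j1) g = ins_at j0 u a \<and> g ! j0 = u \<and> g ! Suc j1 = u \<and> j0 \<le> Suc n \<and> Suc j1 \<le> Suc (Suc n)"
proof -
  define A where "A = take j0 a"
  define B where "B = take (j1 - j0) (drop j0 a)"
  define C where "C = drop j1 a"
  have abc: "a = A @ B @ C" "length A = j0" "length B = j1 - j0"
  proof -
    have "drop j1 a = drop (j1 - j0) (drop j0 a)" using j by simp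
    then have "B @ C = drop j0 a" unfolding B_def C_def by (metis append_take_drop_id)
    then show "a = A @ B @ C" unfolding A_def by simp
    show "length A = j0" "length B = j1 - j0" using j unfolding A_def B_def by auto
  qed
  have Bne: "B \<noteq> []" using abc j by auto
  have e0: "ins_at j0 u a = A @ u # B @ C" using abc by (simp add: ins_at_def)
  have e1: "ins_at j1 u a = (A @ B) @ u # C" using abc j by (simp add: ins_at_def)
  define g where "g = A @ u # B @ u # C"
  have l: "length a = Suc n" using p0 e0 abc(1) unfolding allowed_path_def by simp
  have "allowed_path V E (Suc (Suc n)) g"
  proof -
    have s0: "successively (\<lambda>x y. (x,y)\<in>E) (A @ u # B @ C)" "set (A @ u # B @ C) \<subseteq> V"
      using p0 unfolding allowed_succ e0 by auto
    have s1: "successively (\<lambda>x y. (x,y)\<in>E) (A @ B @ u # C)"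
      using p1 unfolding allowed_succ e1 by auto
    have "successively (\<lambda>x y. (x,y)\<in>E) g" unfolding g_def by (rule succ_gamma[OF s0(1) s1 Bne])
    moreover have "set g \<subseteq> V" using s0(2) unfolding g_def by auto
    moreover have "length g = Suc (Suc (Suc n))" using l abc(1) unfolding g_def by simp
    ultimately show ?thesis unfolding allowed_succ by simp
  qed
  moreover have "del_at j0 g = ins_at j1 u a" unfolding e1 g_def del_at_def using abc by simp
  moreover have "del_at (Suc j1) g = ins_at j0 u a"
  proof -
    have "Suc j1 - j0 = Suc (length B)" "Suc (Suc j1) - j0 = Suc (Suc (length B))" using abc j by auto
    then show ?thesis unfolding e0 g_def del_at_def using abc j by simp
  qed
  moreover have "g ! j0 = u" "g ! Suc j1 = u" unfolding g_def using abc j by (auto simp: nth_append)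
  ultimately show ?thesis using j l by auto
qed

lemma morse_del:
  assumes "discrete_morse V E f" "allowed_path V E (Suc m) p"
    "i \<le> Suc m" "f (p!i) = 0" "allowed_path V E m (del_at i p)"
    "i' \<le> Suc m" "f (p!i') = 0" "allowed_path V E m (del_at i' p)"
  shows "i = i'"
  using assms unfolding discrete_morse_def
  by (metis One_nat_def diff_Suc_1 le_add1 plus_1_eq_Suc)

lemma morse_ins:
  assumes "discrete_morse V E f" "allowed_path V E n p"
    "f u = 0" "j \<le> Suc n" "allowed_path V E (Suc n) (ins_at j u p)"
    "f u' = 0" "j' \<le> Suc n" "allowed_path V E (Suc n) (ins_at j' u' p)"
  shows "u = u'"
  using assms unfolding discrete_morse_def by blast

theorem lemma5p2:
  fixes V :: "'v set" and E :: "('v \<times> 'v) set" and f :: "'v \<Rightarrow> real"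
  assumes "digraph V E" and "discrete_morse V E f"
  shows "\<not> (\<exists>k n (\<alpha> :: nat \<Rightarrow> 'v list) (\<beta> :: nat \<Rightarrow> 'v list).
            k \<ge> 2 \<and> inj_on \<beta> {..<k} \<and>
            (\<forall>i<k. allowed_path V E n (\<alpha> i) \<and> allowed_path V E (Suc n) (\<beta> i) \<and>
                   (\<alpha> i, \<beta> i) \<in> morse_pairs V E f \<and>
                   subseq (\<alpha> ((i + 1) mod k)) (\<beta> i) \<and> \<alpha> ((i + 1) mod k) \<noteq> \<beta> i))"
proof
  assume "\<exists>k n (\<alpha> :: nat \<Rightarrow> 'v list) (\<beta> :: nat \<Rightarrow> 'v list).
            k \<ge> 2 \<and> inj_on \<beta> {..<k} \<and>
            (\<forall>i<k. allowed_path V E n (\<alpha> i) \<and> allowed_path V E (Suc n) (\<beta> i) \<and>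
                   (\<alpha> i, \<beta> i) \<in> morse_pairs V E f \<and>
                   subseq (\<alpha> ((i + 1) mod k)) (\<beta> i) \<and> \<alpha> ((i + 1) mod k) \<noteq> \<beta> i)"
  then obtain k n and \<alpha> \<beta> :: "nat \<Rightarrow> 'v list" where k2: "k \<ge> 2" and inj: "inj_on \<beta> {..<k}" and
    H: "\<forall>i<k. allowed_path V E n (\<alpha> i) \<and> allowed_path V E (Suc n) (\<beta> i) \<and>
                   (\<alpha> i, \<beta> i) \<in> morse_pairs V E f \<and>
                   subseq (\<alpha> ((i + 1) mod k)) (\<beta> i) \<and> \<alpha> ((i + 1) mod k) \<noteq> \<beta> i"
    by blast
  have mor: "discrete_morse V E f" by fact
  have fnn: "\<forall>v\<in>V. f v \<ge> 0" using mor unfolding discrete_morse_def by blast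
  have len: "length (\<alpha> i) = Suc n" "length (\<beta> i) = Suc (Suc n)" "set (\<beta> i) \<subseteq> V" if "i < k" for i
    using H that unfolding allowed_path_def by auto
  have "\<forall>i. \<exists>j. i < k \<longrightarrow> j < Suc (Suc n) \<and> \<alpha> i = del_at j (\<beta> i)"
  proof (intro allI)
    fix i
    show "\<exists>j. i < k \<longrightarrow> j < Suc (Suc n) \<and> \<alpha> i = del_at j (\<beta> i)"
    proof (cases "i < k")
      case True
      then have "subseq (\<alpha> i) (\<beta> i)" using H unfolding morse_pairs_def by auto
      then show ?thesis using subseq_del[of "\<alpha> i" "\<beta> i"] len[OF True] by auto
    qed auto
  qed
  then obtain J where J: "\<And>i. i < k \<Longrightarrow> J i < Suc (Suc n) \<and> \<alpha> i = del_at (J i) (\<beta> i)" by metis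
  have "\<forall>i. \<exists>j. i < k \<longrightarrow> j < Suc (Suc n) \<and> \<alpha> ((i + 1) mod k) = del_at j (\<beta> i)"
  proof (intro allI)
    fix i
    show "\<exists>j. i < k \<longrightarrow> j < Suc (Suc n) \<and> \<alpha> ((i + 1) mod k) = del_at j (\<beta> i)"
    proof (cases "i < k")
      case True
      then have "subseq (\<alpha> ((i + 1) mod k)) (\<beta> i)" using H by auto
      moreover have "(i + 1) mod k < k" using k2 by auto
      ultimately show ?thesis using subseq_del[of "\<alpha> ((i + 1) mod k)" "\<beta> i"] len[OF True] len by auto
    qed auto
  qed
  then obtain K where K: "\<And>i. i < k \<Longrightarrow> K i < Suc (Suc n) \<and> \<alpha> ((i + 1) mod k) = del_at (K i) (\<beta> i)" by metis
  have pveq: "path_val f (\<alpha> i) = path_val f (\<beta> i)" if "i < k" for i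
    using H that unfolding morse_pairs_def by auto
  have fJ: "f (\<beta> i ! J i) = 0" if "i < k" for i
    using val_del[of "J i" "\<beta> i" f] J[OF that] len[OF that] pveq[OF that] by simp
  have pvK: "path_val f (\<alpha> ((i + 1) mod k)) + f (\<beta> i ! K i) = path_val f (\<alpha> i)"
    "f (\<beta> i ! K i) \<ge> 0" if "i < k" for i
  proof -
    show "path_val f (\<alpha> ((i + 1) mod k)) + f (\<beta> i ! K i) = path_val f (\<alpha> i)"
      using val_del[of "K i" "\<beta> i" f] K[OF that] len[OF that] pveq[OF that] by simp
    have "\<beta> i ! K i \<in> V" using K[OF that] len[OF that] by (metis nth_mem subsetD)
    then show "f (\<beta> i ! K i) \<ge> 0" using fnn by blast
  qed
  have chain: "1 \<le> j \<longrightarrow> j < k \<longrightarrow> path_val f (\<alpha> j) \<le> path_val f (\<alpha> 1)" for j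
  proof (induction j)
    case (Suc j)
    show ?case
    proof (cases "j = 0")
      case False
      show ?thesis
      proof (intro impI)
        assume "Suc j < k"
        then have "(j + 1) mod k = Suc j" by simp
        then show "path_val f (\<alpha> (Suc j)) \<le> path_val f (\<alpha> 1)"
          using pvK[of j] Suc False \<open>Suc j < k\<close> by fastforce
      qed
    qed simp
  qed simp
  have km: "k - 1 < k" "1 \<le> k - 1" "(k - 1 + 1) mod k = 0" using k2 by auto
  have "path_val f (\<alpha> 0) \<le> path_val f (\<alpha> 1)"
    using chain[of "k - 1"] pvK[OF km(1)] km by simp
  then have fK0: "f (\<beta> 0 ! K 0) = 0" using pvK[of 0] k2 by (simp add: Suc_lessD)
  have k0: "0 < k" and k1: "1 < k" and mod1: "(0 + 1) mod k = 1" using k2 by auto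
  have "J 0 = K 0"
  proof -
    have A0: "allowed_path V E n (del_at (J 0) (\<beta> 0))" using H k0 J[OF k0] by metis
    have A1: "allowed_path V E n (del_at (K 0) (\<beta> 0))" using H k1 K[OF k0] mod1 by metis
    have B0: "allowed_path V E (Suc n) (\<beta> 0)" using H k0 by blast
    show ?thesis
      using morse_del[OF mor B0 _ _ A0 _ _ A1] J[OF k0] K[OF k0] fJ[OF k0] fK0
      by (simp add: less_Suc_eq_le)
  qed
  then have a10: "\<alpha> 1 = \<alpha> 0" using J[OF k0] K[OF k0] mod1 by simp
  define u0 where "u0 = \<beta> 0 ! J 0"
  define u1 where "u1 = \<beta> 1 ! J 1"
  have b0: "\<beta> 0 = ins_at (J 0) u0 (\<alpha> 0)" unfolding u0_def using J[OF k0] len[OF k0] ins_del by metis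
  have b1: "\<beta> 1 = ins_at (J 1) u1 (\<alpha> 0)" unfolding u1_def using J[OF k1] len[OF k1] ins_del a10 by metis
  have ap0: "allowed_path V E (Suc n) (ins_at (J 0) u0 (\<alpha> 0))" using H k0 b0 by metis
  have ap1: "allowed_path V E (Suc n) (ins_at (J 1) u1 (\<alpha> 0))" using H k1 b1 by metis
  have "u0 = u1"
  proof -
    have A0: "allowed_path V E n (\<alpha> 0)" using H k0 by blast
    show ?thesis
      using morse_ins[OF mor A0 _ _ ap0 _ _ ap1] fJ[OF k0] fJ[OF k1] J[OF k0] J[OF k1]
      unfolding u0_def u1_def by (simp add: less_Suc_eq_le)
  qed
  have "\<beta> 0 \<noteq> \<beta> 1" using inj k1 unfolding inj_on_def by fastforce
  then have Jne: "J 0 \<noteq> J 1" using b0 b1 \<open>u0 = u1\<close> by metis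
  have fu: "f u0 = 0" using fJ[OF k0] u0_def by simp
  have la: "length (\<alpha> 0) = Suc n" using len[OF k0] by simp
  have contra: False if lt: "j0 < j1" and j1: "j1 < Suc (Suc n)"
      and p0: "allowed_path V E (Suc n) (ins_at j0 u0 (\<alpha> 0))"
      and p1: "allowed_path V E (Suc n) (ins_at j1 u0 (\<alpha> 0))" for j0 j1
  proof -
    obtain g where g: "allowed_path V E (Suc (Suc n)) g" "del_at j0 g = ins_at j1 u0 (\<alpha> 0)"
      "del_at (Suc j1) g = ins_at j0 u0 (\<alpha> 0)" "g ! j0 = u0" "g ! Suc j1 = u0"
      "j0 \<le> Suc n" "Suc j1 \<le> Suc (Suc n)"
      using gamma[OF lt _ p0 p1] j1 la by (metis less_Suc_eq_le)
    have "j0 = Suc j1"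
      using morse_del[OF mor g(1), of j0 "Suc j1"] g fu p0 p1 by simp
    then show False using lt by simp
  qed
  show False
  proof (cases "J 0 < J 1")
    case True
    then show False using contra[of "J 0" "J 1"] J[OF k1] ap0 ap1 \<open>u0 = u1\<close> by simp
  next
    case False
    then have "J 1 < J 0" using Jne by simp
    then show False using contra[of "J 1" "J 0"] J[OF k0] ap0 ap1 \<open>u0 = u1\<close> by simp
  qed
qed

end
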